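(* Let $f({\bm\alpha})=G_{\bf w}({\bm\mu}{\bm\alpha})$ on $\Delta_K$. The set $\Delta_K^*=\operatorname{argmin}_{{\bm\alpha}\in\Delta_K}f({\bm\alpha})$ is a convex polytope. Moreover, \[ g^*=\inf_{{\bm\alpha}\in\Delta_K\setminus\Delta_K^*}\ \max_{{\bm\alpha}^*\in\Delta_K^*}\frac{f({\bm\alpha})-f({\bm\alpha}^* )}{\|{\bm\alpha}-{\bm\alpha}^*\|} \] is positive.
   Context: ${\bm\mu}$ is a $D\times K$ real matrix with entries in $[0,1]$ (column $k$ is the mean cost vector of arm $k$). GGI: ${\bf w}\in[0,1]^D$ with $w_1>w_2>\dots>w_D$, $G_{\bf w}({\bf x})=\sum_{d=1}^Dw_dx_{\sigma(d)}$ with $\sigma$ a permutation sorting ${\bf x}$ in decreasing order. $\Delta_K=\{{\bm\alpha}\in\mathbb R^K:\sum_k\alpha_k=1,{\bm\alpha}\succeq0\}$; $\|\cdot\|$ is the Euclidean norm. *)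

theory Defs
  imports "HOL-Analysis.Analysis"
begin

text \<open>Objectives are indexed by 0..<D (paper: 1..D); arms by a finite type 'k.\<close>

definition ggi :: "nat \<Rightarrow> (nat \<Rightarrow> real) \<Rightarrow> (nat \<Rightarrow> real) \<Rightarrow> real" where
  "ggi D w x = (let xs = rev (sort (map x [0..<D])) in \<Sum>d<D. w d * xs ! d)"

definition matvec :: "(nat \<Rightarrow> 'k::finite \<Rightarrow> real) \<Rightarrow> real^'k \<Rightarrow> nat \<Rightarrow> real" where
  "matvec mu a = (\<lambda>d. \<Sum>k\<in>UNIV. mu d k * a $ k)"

definition prob_simplex :: "(real^'k::finite) set" where
  "prob_simplex = {a. (\<forall>k. 0 \<le> a $ k) \<and> (\<Sum>k\<in>UNIV. a $ k) = 1}"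

definition argmin_set :: "(real^'k::finite \<Rightarrow> real) \<Rightarrow> (real^'k) set" where
  "argmin_set f = {a \<in> prob_simplex. \<forall>b \<in> prob_simplex. f a \<le> f b}"

end

theory Submission
  imports Defs
begin


lemma sum_two_change:
  fixes g g' :: "nat \<Rightarrow> real"
  assumes "Suc i < D" "\<And>d. d \<noteq> i \<Longrightarrow> d \<noteq> Suc i \<Longrightarrow> g' d = g d"
  shows "(\<Sum>d<D. g' d) = (\<Sum>d<D. g d) + (g' i - g i) + (g' (Suc i) - g (Suc i))"
proof -
  have "(\<Sum>d<D. g' d - g d) = (\<Sum>d\<in>{i, Suc i}. g' d - g d)"
    by (rule sum.mono_neutral_right) (use assms in auto)
  then show ?thesis by (simp add: sum_subtractf)
qed

lemma ggi_perm:
  fixes x :: "nat \<Rightarrow> real"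
  assumes wd: "\<And>i j. i < j \<Longrightarrow> j < D \<Longrightarrow> w j \<le> w i"
  shows "(\<forall>\<sigma>. \<sigma> permutes {..<D} \<longrightarrow> (\<Sum>d<D. w d * x (\<sigma> d)) \<le> ggi D w x) \<and>
         (\<exists>\<sigma>. \<sigma> permutes {..<D} \<and> ggi D w x = (\<Sum>d<D. w d * x (\<sigma> d)))"
proof -
  define P where "P = {\<sigma>. \<sigma> permutes {..<D}}"
  define V where "V \<sigma> = (\<Sum>d<D. w d * x (\<sigma> d))" for \<sigma> :: "nat \<Rightarrow> nat"
  define M where "M \<sigma> = (\<Sum>d<D. real d * x (\<sigma> d))" for \<sigma> :: "nat \<Rightarrow> nat"
  have finP: "finite P" unfolding P_def by (rule finite_permutations) simp
  have neP: "P \<noteq> {}" unfolding P_def using permutes_id by blast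
  define S1 where "S1 = {\<sigma>\<in>P. V \<sigma> = Max (V ` P)}"
  have finS1: "finite S1" using finP unfolding S1_def by simp
  have neS1: "S1 \<noteq> {}"
  proof -
    have "Max (V ` P) \<in> V ` P" using finP neP by simp
    then show ?thesis unfolding S1_def by auto
  qed
  obtain \<sigma>0 where s0: "\<sigma>0 \<in> S1" "M \<sigma>0 = Min (M ` S1)"
  proof -
    have "Min (M ` S1) \<in> M ` S1" using finS1 neS1 by simp
    then show ?thesis using that by auto
  qed
  have s0P: "\<sigma>0 permutes {..<D}" using s0 unfolding S1_def P_def by auto
  have adj: "x (\<sigma>0 (Suc i)) \<le> x (\<sigma>0 i)" if "Suc i < D" for i
  proof (rule ccontr)
    assume "\<not> ?thesis"
    hence lt: "x (\<sigma>0 i) < x (\<sigma>0 (Suc i))" by simp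
    define \<sigma>' where "\<sigma>' = \<sigma>0 \<circ> Transposition.transpose i (Suc i)"
    have s'P: "\<sigma>' \<in> P" unfolding P_def \<sigma>'_def
      using that by (auto intro!: permutes_compose permutes_swap_id s0P)
    have "V \<sigma>' = V \<sigma>0 + (w i * x (\<sigma>0 (Suc i)) - w i * x (\<sigma>0 i))
           + (w (Suc i) * x (\<sigma>0 i) - w (Suc i) * x (\<sigma>0 (Suc i)))"
      using sum_two_change[OF that, of "\<lambda>d. w d * x (\<sigma>' d)" "\<lambda>d. w d * x (\<sigma>0 d)"]
      unfolding V_def by (simp add: \<sigma>'_def transpose_def)
    moreover have "w (Suc i) \<le> w i" using wd that by simp
    moreover have "0 \<le> (w i - w (Suc i)) * (x (\<sigma>0 (Suc i)) - x (\<sigma>0 i))" using lt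
      \<open>w (Suc i) \<le> w i\<close> by (intro mult_nonneg_nonneg) auto
    ultimately have "V \<sigma>' = V \<sigma>0 + (w i - w (Suc i)) * (x (\<sigma>0 (Suc i)) - x (\<sigma>0 i))"
      "0 \<le> (w i - w (Suc i)) * (x (\<sigma>0 (Suc i)) - x (\<sigma>0 i))"
      by (auto simp: algebra_simps)
    hence "V \<sigma>' \<ge> V \<sigma>0" by linarith
    moreover have "V \<sigma>' \<le> Max (V ` P)" using finP s'P by simp
    ultimately have "\<sigma>' \<in> S1" using s0 s'P unfolding S1_def by auto
    hence "M \<sigma>0 \<le> M \<sigma>'" using s0 finS1 by simp
    moreover have "M \<sigma>' = M \<sigma>0 + (real i * x (\<sigma>0 (Suc i)) - real i * x (\<sigma>0 i))
           + (real (Suc i) * x (\<sigma>0 i) - real (Suc i) * x (\<sigma>0 (Suc i)))"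
      using sum_two_change[OF that, of "\<lambda>d. real d * x (\<sigma>' d)" "\<lambda>d. real d * x (\<sigma>0 d)"]
      unfolding M_def by (simp add: \<sigma>'_def transpose_def)
    ultimately show False using lt by (simp add: algebra_simps)
  qed
  have mono: "x (\<sigma>0 j) \<le> x (\<sigma>0 i)" if "i \<le> j" "j < D" for i j
    using that
  proof (induction j)
    case 0 then show ?case by simp
  next
    case (Suc j)
    show ?case
    proof (cases "i = Suc j")
      case True then show ?thesis by simp
    next
      case False
      then have "i \<le> j" using Suc.prems by simp
      then show ?thesis using Suc adj[of j] by simp
    qed
  qed
  define ys where "ys = map (\<lambda>d. x (\<sigma>0 d)) [0..<D]"
  have "sorted (rev ys)"
    unfolding sorted_rev_iff_nth_mono ys_def
    using mono by auto
  moreover have "mset (rev ys) = mset (map x [0..<D])"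
  proof -
    have "mset (map \<sigma>0 [0..<D]) = mset [0..<D]"
    proof -
      have "distinct (map \<sigma>0 [0..<D])"
        using permutes_inj[OF s0P] by (simp add: distinct_map inj_on_def)
      then have "mset (map \<sigma>0 [0..<D]) = mset_set (set (map \<sigma>0 [0..<D]))"
        by (rule mset_set_set[symmetric])
      also have "set (map \<sigma>0 [0..<D]) = {..<D}"
        using permutes_image[OF s0P] by (simp add: lessThan_atLeast0)
      finally show ?thesis by (simp only: mset_upt lessThan_atLeast0)
    qed
    then have "mset (map x (map \<sigma>0 [0..<D])) = mset (map x [0..<D])"
      by (simp only: mset_map)
    then show ?thesis unfolding ys_def by (simp add: comp_def)
  qed
  ultimately have "sort (map x [0..<D]) = rev ys" by (intro properties_for_sort) simp
  then have ggi_eq: "ggi D w x = V \<sigma>0"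
    unfolding ggi_def V_def Let_def by (simp add: ys_def)
  have "V \<sigma>0 = Max (V ` P)" using s0 unfolding S1_def by auto
  moreover have "V \<sigma> \<le> Max (V ` P)" if "\<sigma> permutes {..<D}" for \<sigma>
    using finP that unfolding P_def by simp
  ultimately show ?thesis using ggi_eq s0P unfolding V_def by auto
qed



lemma sharp:
  fixes P A :: "'a::euclidean_space set" and v :: 'a and m :: real
  assumes polyP: "polytope P" and lowP: "\<And>a. a \<in> P \<Longrightarrow> m \<le> v \<bullet> a"
    and inA: "\<And>a. a \<in> P \<Longrightarrow> v \<bullet> a \<le> m \<Longrightarrow> a \<in> A"
    and neA: "A \<noteq> {}" and nP: "\<And>x. x \<in> P \<Longrightarrow> norm x \<le> 1"
    and nA: "\<And>x. x \<in> A \<Longrightarrow> norm x \<le> 1"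
  shows "\<exists>c>0. \<forall>a\<in>P. \<exists>z\<in>A. c * norm (a - z) \<le> v \<bullet> a - m"
proof -
  obtain V where finV: "finite V" and PV: "P = convex hull V"
    using polyP unfolding polytope_def by auto
  have VP: "V \<subseteq> P" unfolding PV by (rule hull_subset)
  have cvxP: "convex P" unfolding PV by (rule convex_convex_hull)
  define V1 where "V1 = {x\<in>V. m < v \<bullet> x}"
  define V0 where "V0 = V - V1"
  have finV1: "finite V1" "finite V0" using finV unfolding V1_def V0_def by auto
  have V0m: "v \<bullet> x = m" if "x \<in> V0" for x
  proof -
    have "x \<in> P" "\<not> m < v \<bullet> x" using that VP unfolding V0_def V1_def by auto
    then show ?thesis using lowP by force
  qed
  show ?thesis
  proof (cases "V1 = {}")
    case True
    show ?thesis
    proof (intro exI[of _ 1] conjI ballI)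
      fix a assume aP: "a \<in> P"
      have "convex (P \<inter> {x. v \<bullet> x \<le> m})"
        using cvxP by (intro convex_Int convex_halfspace_le)
      moreover have "V \<subseteq> P \<inter> {x. v \<bullet> x \<le> m}" using VP True unfolding V1_def by auto
      ultimately have "convex hull V \<subseteq> P \<inter> {x. v \<bullet> x \<le> m}" by (meson hull_minimal)
      then have "a \<in> A" using aP inA unfolding PV[symmetric] by blast
      then show "\<exists>z\<in>A. 1 * norm (a - z) \<le> v \<bullet> a - m" using lowP[OF aP] by (intro bexI[of _ a]) auto
    qed simp
  next
    case False
    define \<mu> where "\<mu> = Min ((\<lambda>x. v \<bullet> x - m) ` V1)"
    have \<mu>pos: "\<mu> > 0" unfolding \<mu>_def using finV1 False by (auto simp: V1_def)
    have \<mu>le: "\<mu> \<le> v \<bullet> x - m" if "x \<in> V1" for x unfolding \<mu>_def using finV1 that by simp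
    show ?thesis
    proof (intro exI[of _ "\<mu>/2"] conjI ballI)
      show "\<mu>/2 > 0" using \<mu>pos by simp
      fix a assume aP: "a \<in> P"
      obtain u where u0: "\<forall>x\<in>V. 0 \<le> u x" and u1: "sum u V = 1" and ua: "(\<Sum>x\<in>V. u x *\<^sub>R x) = a"
        using aP unfolding PV convex_hull_finite[OF finV] by auto
      define s where "s = sum u V1"
      define t where "t = sum u V0"
      have V01: "V = V0 \<union> V1" "V0 \<inter> V1 = {}" unfolding V0_def V1_def by auto
      have st: "s + t = 1" using u1 finV1 V01 unfolding s_def t_def
        by (metis sum.union_disjoint add.commute)
      have s0: "s \<ge> 0" "t \<ge> 0" using u0 V01 unfolding s_def t_def by (auto intro!: sum_nonneg)
      have e1: "v \<bullet> a - m = (\<Sum>x\<in>V. u x * (v \<bullet> x - m))"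
        using u1 by (simp add: ua[symmetric] inner_sum_right sum_subtractf algebra_simps sum_distrib_left[symmetric])
      have e2: "(\<Sum>x\<in>V. u x * (v \<bullet> x - m)) = (\<Sum>x\<in>V0. u x * (v \<bullet> x - m)) + (\<Sum>x\<in>V1. u x * (v \<bullet> x - m))"
        using finV1 V01 by (simp add: sum.union_disjoint)
      have e3: "(\<Sum>x\<in>V0. u x * (v \<bullet> x - m)) = 0" using V0m by simp
      have e4: "(\<Sum>x\<in>V1. u x * (v \<bullet> x - m)) \<ge> (\<Sum>x\<in>V1. u x * \<mu>)"
        using u0 \<mu>le V01 by (intro sum_mono mult_left_mono) auto
      have e5: "(\<Sum>x\<in>V1. u x * \<mu>) = s * \<mu>" by (simp add: s_def sum_distrib_right)
      have key: "v \<bullet> a - m \<ge> s * \<mu>" using e1 e2 e3 e4 e5 by linarith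
      define a1 where "a1 = (\<Sum>x\<in>V1. u x *\<^sub>R x)"
      define a0 where "a0 = (\<Sum>x\<in>V0. u x *\<^sub>R x)"
      have aa: "a = a0 + a1" unfolding a0_def a1_def ua[symmetric] using finV1 V01
        by (simp add: sum.union_disjoint)
      have na1: "norm a1 \<le> s" unfolding a1_def s_def
      proof -
        have "norm (\<Sum>x\<in>V1. u x *\<^sub>R x) \<le> (\<Sum>x\<in>V1. norm (u x *\<^sub>R x))" by (rule norm_sum)
        also have "\<dots> \<le> (\<Sum>x\<in>V1. u x)"
          using u0 V01 nP VP by (intro sum_mono) (auto intro!: mult_left_le)
        finally show "norm (\<Sum>x\<in>V1. u x *\<^sub>R x) \<le> sum u V1" .
      qed
      have na0: "norm a0 \<le> t" unfolding a0_def t_def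
      proof -
        have "norm (\<Sum>x\<in>V0. u x *\<^sub>R x) \<le> (\<Sum>x\<in>V0. norm (u x *\<^sub>R x))" by (rule norm_sum)
        also have "\<dots> \<le> (\<Sum>x\<in>V0. u x)"
          using u0 V01 nP VP by (intro sum_mono) (auto intro!: mult_left_le)
        finally show "norm (\<Sum>x\<in>V0. u x *\<^sub>R x) \<le> sum u V0" .
      qed
      obtain z where zA: "z \<in> A" and nz: "norm (a - z) \<le> 2 * s"
      proof (cases "t = 0")
        case True
        obtain z where "z \<in> A" using neA by auto
        moreover have "norm (a - z) \<le> 2 * s"
        proof -
          have "norm (a - z) \<le> norm a + norm z" by (rule norm_triangle_ineq4)
          also have "\<dots> \<le> 2" using nP[OF aP] nA[OF \<open>z\<in>A\<close>] by simp
          finally show ?thesis using st True by simp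
        qed
        ultimately show ?thesis using that by blast
      next
        case False
        hence tpos: "t > 0" using s0 by simp
        define z where "z = (1/t) *\<^sub>R a0"
        have "z = (\<Sum>x\<in>V0. (u x / t) *\<^sub>R x)" unfolding z_def a0_def
          by (simp add: scaleR_sum_right)
        also have "\<dots> \<in> P \<inter> {x. v \<bullet> x \<le> m}"
        proof (rule convex_sum)
          show "finite V0" by fact
          show "convex (P \<inter> {x. v \<bullet> x \<le> m})"
            using cvxP by (intro convex_Int convex_halfspace_le)
          show "(\<Sum>x\<in>V0. u x / t) = 1" using tpos unfolding t_def by (simp add: sum_divide_distrib[symmetric])
          show "\<And>i. i \<in> V0 \<Longrightarrow> 0 \<le> u i / t" using u0 V01 tpos by auto
          show "\<And>i. i \<in> V0 \<Longrightarrow> i \<in> P \<inter> {x. v \<bullet> x \<le> m}" using VP V0m V01 by auto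
        qed
        finally have zA: "z \<in> A" using inA by blast
        have "a - z = a1 - (s / t) *\<^sub>R a0"
        proof -
          have "a0 - z = (1 - 1/t) *\<^sub>R a0" unfolding z_def by (simp add: algebra_simps)
          also have "1 - 1/t = - (s/t)" using st tpos by (simp add: field_simps) (metis distrib_right mult_1)
          finally show ?thesis using aa by (simp add: algebra_simps)
        qed
        hence "norm (a - z) \<le> norm a1 + (s/t) * norm a0"
          using s0 tpos by (metis norm_triangle_ineq4 norm_scaleR abs_of_nonneg divide_nonneg_nonneg less_imp_le)
        also have "(s/t) * norm a0 \<le> (s/t) * t" using na0 s0 tpos by (intro mult_left_mono) auto
        finally have "norm (a - z) \<le> 2 * s" using na1 tpos by simp
        then show ?thesis using that zA by blast
      qed
      have "\<mu>/2 * norm (a - z) \<le> \<mu>/2 * (2 * s)" using nz \<mu>pos by (intro mult_left_mono) auto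
      then show "\<exists>z\<in>A. \<mu>/2 * norm (a - z) \<le> v \<bullet> a - m" using zA key
        by (intro bexI[of _ z]) (auto simp: algebra_simps)
    qed
  qed
qed



lemma continuous_on_Max_fin:
  fixes g :: "'i \<Rightarrow> 'a::topological_space \<Rightarrow> real"
  assumes "finite I" "I \<noteq> {}" "\<And>i. i \<in> I \<Longrightarrow> continuous_on S (g i)"
  shows "continuous_on S (\<lambda>x. Max ((\<lambda>i. g i x) ` I))"
  using assms
proof (induction I rule: finite_ne_induct)
  case (singleton i) then show ?case by simp
next
  case (insert i F)
  have "continuous_on S (\<lambda>x. max (g i x) (Max ((\<lambda>i. g i x) ` F)))"
    using insert by (intro continuous_on_max) auto
  moreover have "(\<lambda>x. Max ((\<lambda>i. g i x) ` insert i F)) = (\<lambda>x. max (g i x) (Max ((\<lambda>i. g i x) ` F)))"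
    using insert by (auto simp: Max_insert)
  ultimately show ?case by (simp only:)
qed

lemma simplex_norm:
  fixes a :: "real^'k::finite"
  assumes "a \<in> prob_simplex" shows "norm a \<le> 1"
proof -
  have "norm a \<le> (\<Sum>k\<in>UNIV. \<bar>a $ k\<bar>)" by (rule norm_le_l1_cart)
  also have "\<dots> = (\<Sum>k\<in>UNIV. a $ k)" using assms unfolding prob_simplex_def by simp
  also have "\<dots> = 1" using assms unfolding prob_simplex_def by simp
  finally show ?thesis .
qed

lemma simplex_eq:
  "(prob_simplex :: (real^'k::finite) set) =
     (\<Inter>k\<in>UNIV. {a. axis k 1 \<bullet> a \<ge> 0}) \<inter> {a. (\<chi> k. 1) \<bullet> a = 1}"
proof -
  have e1: "axis k 1 \<bullet> a = a $ k" for k and a :: "real^'k" by (simp add: inner_axis')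
  have e2: "(\<chi> k. 1) \<bullet> a = (\<Sum>k\<in>UNIV. a $ k)" for a :: "real^'k" by (simp add: inner_vec_def)
  show ?thesis unfolding prob_simplex_def e1 e2 by auto
qed

lemma polytope_simplex: "polytope (prob_simplex :: (real^'k::finite) set)"
proof -
  have "polyhedron (prob_simplex :: (real^'k::finite) set)"
    unfolding simplex_eq
    by (intro polyhedron_Int polyhedron_Inter polyhedron_hyperplane)
       (auto intro: polyhedron_halfspace_ge)
  moreover have "bounded (prob_simplex :: (real^'k::finite) set)"
    unfolding bounded_iff using simplex_norm by blast
  ultimately show ?thesis by (simp add: polytope_eq_bounded_polyhedron)
qed

lemma simplex_ne: "(prob_simplex :: (real^'k::finite) set) \<noteq> {}"
proof -
  obtain k0 :: 'k where True by simp
  have "axis k0 1 \<in> (prob_simplex :: (real^'k::finite) set)"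
    unfolding prob_simplex_def by (auto simp: axis_def)
  then show ?thesis by blast
qed



theorem lemma3:
  fixes D :: nat and w :: "nat \<Rightarrow> real" and mu :: "nat \<Rightarrow> 'k::finite \<Rightarrow> real"
    and f :: "real^'k \<Rightarrow> real"
  assumes mu_range: "\<And>d k. d < D \<Longrightarrow> 0 \<le> mu d k \<and> mu d k \<le> 1"
    and w_range: "\<And>d. d < D \<Longrightarrow> 0 \<le> w d \<and> w d \<le> 1"
    and w_decr: "\<And>i j. i < j \<Longrightarrow> j < D \<Longrightarrow> w j < w i"
    and f_def: "\<And>a. f a = ggi D w (matvec mu a)"
  shows "polytope (argmin_set f) \<and>
    (prob_simplex - argmin_set f \<noteq> {} \<longrightarrow>
      (INF a \<in> prob_simplex - argmin_set f.
         SUP a' \<in> argmin_set f. (f a - f a') / norm (a - a')) > 0)"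
proof -
  define S :: "(real^'k) set" where "S = prob_simplex"
  define Pi where "Pi = {\<sigma>. \<sigma> permutes {..<D}}"
  define c where "c \<sigma> = (\<chi> k. \<Sum>d<D. w d * mu (\<sigma> d) k)" for \<sigma> :: "nat \<Rightarrow> nat"
  have finPi: "finite Pi" unfolding Pi_def by (rule finite_permutations) simp
  have nePi: "Pi \<noteq> {}" unfolding Pi_def using permutes_id by blast
  have Lc: "c \<sigma> \<bullet> a = (\<Sum>d<D. w d * matvec mu a (\<sigma> d))" for \<sigma> a
  proof -
    have "c \<sigma> \<bullet> a = (\<Sum>k\<in>UNIV. (\<Sum>d<D. w d * mu (\<sigma> d) k) * a $ k)"
      unfolding c_def by (simp add: inner_vec_def)
    also have "\<dots> = (\<Sum>k\<in>UNIV. \<Sum>d<D. w d * (mu (\<sigma> d) k * a $ k))"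
      by (simp add: sum_distrib_right mult.assoc)
    also have "\<dots> = (\<Sum>d<D. \<Sum>k\<in>UNIV. w d * (mu (\<sigma> d) k * a $ k))"
      by (rule sum.swap)
    also have "\<dots> = (\<Sum>d<D. w d * matvec mu a (\<sigma> d))"
      unfolding matvec_def by (simp add: sum_distrib_left)
    finally show ?thesis .
  qed
  have wd: "\<And>i j. i < j \<Longrightarrow> j < D \<Longrightarrow> w j \<le> w i" using w_decr by (simp add: less_imp_le)
  have F1: "c \<sigma> \<bullet> a \<le> f a" if "\<sigma> \<in> Pi" for \<sigma> a
    using ggi_perm[where x="matvec mu a", OF wd] that unfolding Pi_def Lc f_def by auto
  have F2: "\<exists>\<sigma>\<in>Pi. f a = c \<sigma> \<bullet> a" for a
    using ggi_perm[where x="matvec mu a", OF wd] unfolding Pi_def Lc f_def by auto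
  have fMax: "f = (\<lambda>a. Max ((\<lambda>\<sigma>. c \<sigma> \<bullet> a) ` Pi))"
  proof
    fix a
    obtain \<sigma> where "\<sigma> \<in> Pi" "f a = c \<sigma> \<bullet> a" using F2 by blast
    then show "f a = Max ((\<lambda>\<sigma>. c \<sigma> \<bullet> a) ` Pi)"
      using F1 finPi by (intro Max_eqI[symmetric]) (auto, metis)
  qed
  have contf: "continuous_on S f"
    unfolding fMax by (intro continuous_on_Max_fin finPi nePi continuous_intros)
  obtain a0 where a0S: "a0 \<in> S" and a0min: "\<forall>b\<in>S. f a0 \<le> f b"
    using continuous_attains_inf[OF polytope_imp_compact[OF polytope_simplex] simplex_ne contf[unfolded S_def]]
    unfolding S_def by blast
  define m where "m = f a0"
  define A where "A = argmin_set f"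
  have A_eq: "A = {a\<in>S. f a \<le> m}"
  proof -
    have "(\<forall>b\<in>S. f a \<le> f b) \<longleftrightarrow> f a \<le> m" for a
      using a0S a0min unfolding m_def by (meson order_trans)
    then show ?thesis unfolding A_def argmin_set_def S_def[symmetric] by auto
  qed
  have A_eq2: "A = S \<inter> (\<Inter>\<sigma>\<in>Pi. {a. c \<sigma> \<bullet> a \<le> m})"
  proof -
    have "f a \<le> m \<longleftrightarrow> (\<forall>\<sigma>\<in>Pi. c \<sigma> \<bullet> a \<le> m)" for a
    proof
      assume "f a \<le> m" then show "\<forall>\<sigma>\<in>Pi. c \<sigma> \<bullet> a \<le> m" using F1 by (meson order_trans)
    next
      assume "\<forall>\<sigma>\<in>Pi. c \<sigma> \<bullet> a \<le> m" then show "f a \<le> m" using F2[of a] by auto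
    qed
    then show ?thesis unfolding A_eq by auto
  qed
  have normS: "norm x \<le> 1" if "x \<in> S" for x using simplex_norm that unfolding S_def by blast
  have ptS: "polytope S" unfolding S_def by (rule polytope_simplex)
  have phS: "polyhedron S" using ptS by (simp add: polytope_eq_bounded_polyhedron)
  have phI: "polyhedron (\<Inter>\<sigma>\<in>Pi. {a. v \<sigma> \<bullet> a \<le> b})" for v :: "(nat \<Rightarrow> nat) \<Rightarrow> real^'k" and b
    by (rule polyhedron_Inter) (auto simp: finPi polyhedron_halfspace_le)
  have polyA: "polytope A"
  proof -
    have "polyhedron A" unfolding A_eq2 using phS phI by (rule polyhedron_Int)
    moreover have "bounded A" unfolding bounded_iff A_eq using normS by blast
    ultimately show ?thesis by (simp add: polytope_eq_bounded_polyhedron)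
  qed
  have a0A: "a0 \<in> A" unfolding A_eq m_def using a0S by simp
  have AS: "A \<subseteq> S" unfolding A_eq by auto
  have piece: "\<exists>C>0. \<forall>a\<in>S \<inter> (\<Inter>\<tau>\<in>Pi. {a. (c \<tau> - c \<sigma>) \<bullet> a \<le> 0}). \<exists>z\<in>A. C * norm (a - z) \<le> c \<sigma> \<bullet> a - m"
    if "\<sigma> \<in> Pi" for \<sigma>
  proof (rule sharp)
    let ?P = "S \<inter> (\<Inter>\<tau>\<in>Pi. {a. (c \<tau> - c \<sigma>) \<bullet> a \<le> 0})"
    have feq: "f a = c \<sigma> \<bullet> a" if "a \<in> ?P" for a
    proof -
      obtain \<tau> where "\<tau> \<in> Pi" "f a = c \<tau> \<bullet> a" using F2 by blast
      then have "f a \<le> c \<sigma> \<bullet> a" using that by (auto simp: inner_diff_left)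
      then show ?thesis using F1[OF \<open>\<sigma> \<in> Pi\<close>, of a] by simp
    qed
    show "polytope ?P"
    proof -
      have "polyhedron ?P" using phS phI[of "\<lambda>\<tau>. c \<tau> - c \<sigma>" 0] by (rule polyhedron_Int)
      moreover have "bounded ?P" unfolding bounded_iff using normS by blast
      ultimately show ?thesis by (simp add: polytope_eq_bounded_polyhedron)
    qed
    show "\<And>a. a \<in> ?P \<Longrightarrow> m \<le> c \<sigma> \<bullet> a"
    proof -
      fix a assume "a \<in> ?P"
      then show "m \<le> c \<sigma> \<bullet> a" using feq[of a] a0min unfolding m_def by auto
    qed
    show "\<And>a. a \<in> ?P \<Longrightarrow> c \<sigma> \<bullet> a \<le> m \<Longrightarrow> a \<in> A"
    proof -
      fix a assume "a \<in> ?P" "c \<sigma> \<bullet> a \<le> m"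
      then show "a \<in> A" using feq[of a] unfolding A_eq by auto
    qed
    show "A \<noteq> {}" using a0A by blast
    show "\<And>x. x \<in> ?P \<Longrightarrow> norm x \<le> 1" using normS by blast
    show "\<And>x. x \<in> A \<Longrightarrow> norm x \<le> 1" using normS AS by blast
  qed
  obtain Cf where Cf: "\<And>\<sigma>. \<sigma> \<in> Pi \<Longrightarrow> Cf \<sigma> > 0 \<and>
      (\<forall>a\<in>S \<inter> (\<Inter>\<tau>\<in>Pi. {a. (c \<tau> - c \<sigma>) \<bullet> a \<le> 0}). \<exists>z\<in>A. Cf \<sigma> * norm (a - z) \<le> c \<sigma> \<bullet> a - m)"
  proof -
    have "\<forall>\<sigma>\<in>Pi. \<exists>C. C > 0 \<and>
      (\<forall>a\<in>S \<inter> (\<Inter>\<tau>\<in>Pi. {a. (c \<tau> - c \<sigma>) \<bullet> a \<le> 0}). \<exists>z\<in>A. C * norm (a - z) \<le> c \<sigma> \<bullet> a - m)"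
      using piece by blast
    from bchoice[OF this] obtain Cf where "\<forall>\<sigma>\<in>Pi. Cf \<sigma> > 0 \<and>
      (\<forall>a\<in>S \<inter> (\<Inter>\<tau>\<in>Pi. {a. (c \<tau> - c \<sigma>) \<bullet> a \<le> 0}). \<exists>z\<in>A. Cf \<sigma> * norm (a - z) \<le> c \<sigma> \<bullet> a - m)" ..
    then show ?thesis using that by blast
  qed
  define C0 where "C0 = Min (Cf ` Pi)"
  have C0pos: "C0 > 0" unfolding C0_def using finPi nePi Cf by auto
  have sharpS: "\<exists>z\<in>A. C0 * norm (a - z) \<le> f a - m" if "a \<in> S" for a
  proof -
    obtain \<sigma> where s: "\<sigma> \<in> Pi" "f a = c \<sigma> \<bullet> a" using F2 by blast
    have "a \<in> S \<inter> (\<Inter>\<tau>\<in>Pi. {a. (c \<tau> - c \<sigma>) \<bullet> a \<le> 0})"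
      using that s F1[of _ a] by (fastforce simp: inner_diff_left)
    then obtain z where z: "z \<in> A" "Cf \<sigma> * norm (a - z) \<le> c \<sigma> \<bullet> a - m" using Cf[OF s(1)] by blast
    have "C0 \<le> Cf \<sigma>" unfolding C0_def using finPi s(1) by simp
    then have "C0 * norm (a - z) \<le> Cf \<sigma> * norm (a - z)" by (intro mult_right_mono) auto
    then show ?thesis using z s by (intro bexI[of _ z]) auto
  qed
  have part2: "(INF a \<in> S - A. SUP a' \<in> A. (f a - f a') / norm (a - a')) > 0" if ne: "S - A \<noteq> {}"
  proof -
    have "(INF a \<in> S - A. SUP a' \<in> A. (f a - f a') / norm (a - a')) \<ge> C0"
    proof (rule cINF_greatest[OF ne])
      fix a assume aSA: "a \<in> S - A"
      have fA: "f a' = m" if "a' \<in> A" for a'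
        using that a0min a0S unfolding A_eq m_def by (auto intro: antisym)
      have clA: "closed A" using polyA polytope_imp_compact compact_imp_closed by blast
      have dpos: "infdist a A > 0" using infdist_pos_not_in_closed[OF clA] a0A aSA by blast
      have fam: "f a - m \<ge> 0" using aSA a0min unfolding m_def by auto
      have bdd: "bdd_above ((\<lambda>a'. (f a - f a') / norm (a - a')) ` A)"
      proof (rule bdd_aboveI2)
        fix a' assume "a' \<in> A"
        have "infdist a A \<le> norm (a - a')" using infdist_le[OF \<open>a' \<in> A\<close>] by (simp add: dist_norm)
        then show "(f a - f a') / norm (a - a') \<le> (f a - m) / infdist a A"
        proof -
          have "(f a - m) / norm (a - a') \<le> (f a - m) / infdist a A"
            using \<open>infdist a A \<le> norm (a - a')\<close> fam dpos
            by (intro divide_left_mono) (auto intro!: mult_pos_pos)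
          then show ?thesis using fA[OF \<open>a' \<in> A\<close>] by simp
        qed
      qed
      obtain z where z: "z \<in> A" "C0 * norm (a - z) \<le> f a - m" using sharpS aSA by blast
      have nz: "norm (a - z) > 0" using z aSA by auto
      have "C0 \<le> (f a - f z) / norm (a - z)"
        using z nz fA[OF z(1)] by (simp add: pos_le_divide_eq)
      also have "\<dots> \<le> (SUP a' \<in> A. (f a - f a') / norm (a - a'))"
        using bdd z(1) by (rule cSUP_upper2) simp
      finally show "C0 \<le> (SUP a' \<in> A. (f a - f a') / norm (a - a'))" .
    qed
    then show ?thesis using C0pos by linarith
  qed
  show ?thesis using polyA part2 unfolding A_def S_def by blast
qed

end
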